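(* There exists a deterministic distributed algorithm such that, for every graph $G$ (of any size $n$ and any diameter $D$), there is an assignment of advice to the nodes of $G$ with advice size $1$ (one node receives the bit $1$, all others receive the bit $0$) under which the algorithm accomplishes labeled topology recognition in $G$ within time $2D+1$.
   Context: Graphs are finite, simple, undirected, connected, with no node labels; at each node of degree $d$ the incident edges carry distinct port numbers $0,\dots,d-1$ (no coherence between endpoints). Two such graphs are isomorphic if there is a bijection of nodes preserving edges and the port numbers at both endpoints of every edge. Communication model (LOCAL): computation proceeds in synchronous rounds, all nodes start simultaneously; in each round every node may send arbitrary messages to all its neighbours, receives the messages of its neighbours (knowing the port through which each arrives), and performs arbitrary local computation. Initially a node knows only its degree and its advice. Advice: an oracle that knows the whole graph assigns to each node a binary string; the size of advice is the maximum length of these strings. All nodes execute the same deterministic algorithm, which does not know the graph. Anonymous topology recognition: every node outputs a port-labeled graph isomorphic to $G$. Labeled topology recognition: all nodes output the same port-labeled graph $H$ with distinct node labels, and each node outputs its own label, such that there is an isomorphism from $G$ to $H$ mapping every node to the node of $H$ carrying the label that node output. The time of recognition is the number of rounds after which all nodes have produced their output. *)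

theory Defs
  imports Main
begin

text \<open>A port-labeled graph with n nodes is represented by a list G of length n;
  nodes are 0..<n. The entry G!v!p = (u,q) means: the edge leaving v through
  port p goes to node u and arrives at u through port q. Node names 0..<n are not
  visible to the algorithm (graphs are anonymous).\<close>

type_synonym pgraph = "(nat \<times> nat) list list"

definition adj :: "pgraph \<Rightarrow> (nat \<times> nat) set" where
  "adj G = {(v, fst (G ! v ! p)) | v p. v < length G \<and> p < length (G ! v)}"

definition wf_pgraph :: "pgraph \<Rightarrow> bool" where
  "wf_pgraph G \<longleftrightarrow>
     G \<noteq> [] \<and>
     (\<forall>v < length G. \<forall>p < length (G ! v).
        fst (G ! v ! p) < length G \<and>
        snd (G ! v ! p) < length (G ! fst (G ! v ! p)) \<and>
        G ! fst (G ! v ! p) ! snd (G ! v ! p) = (v, p) \<and>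
        fst (G ! v ! p) \<noteq> v) \<and>
     (\<forall>v < length G. distinct (map fst (G ! v))) \<and>
     (\<forall>u < length G. \<forall>v < length G. (u, v) \<in> (adj G)\<^sup>*)"

definition gdist :: "pgraph \<Rightarrow> nat \<Rightarrow> nat \<Rightarrow> nat" where
  "gdist G u v = (LEAST k. (u, v) \<in> adj G ^^ k)"

definition diam :: "pgraph \<Rightarrow> nat" where
  "diam G = Max {gdist G u v | u v. u < length G \<and> v < length G}"

definition port_iso :: "pgraph \<Rightarrow> pgraph \<Rightarrow> (nat \<Rightarrow> nat) \<Rightarrow> bool" where
  "port_iso G H f \<longleftrightarrow>
     bij_betw f {..<length G} {..<length H} \<and>
     (\<forall>v < length G. length (H ! f v) = length (G ! v) \<and>
        (\<forall>p < length (G ! v). H ! f v ! p = (f (fst (G ! v ! p)), snd (G ! v ! p))))"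

text \<open>Local states and messages are natural numbers (which can encode any finite
  information). init receives only the degree and the advice string; send s p
  is the message sent through port p; step s ms computes the new state from
  the list ms of received messages, indexed by the receiving port; out s is the
  output (if any) in state s: an output graph and the node's own label.\<close>

record alg =
  a_init :: "nat \<Rightarrow> bool list \<Rightarrow> nat"
  a_send :: "nat \<Rightarrow> nat \<Rightarrow> nat"
  a_step :: "nat \<Rightarrow> nat list \<Rightarrow> nat"
  a_out  :: "nat \<Rightarrow> (pgraph \<times> nat) option"

fun run :: "alg \<Rightarrow> pgraph \<Rightarrow> (nat \<Rightarrow> bool list) \<Rightarrow> nat \<Rightarrow> nat \<Rightarrow> nat" where
  "run A G adv 0 v = a_init A (length (G ! v)) (adv v)"
| "run A G adv (Suc t) v =
     a_step A (run A G adv t v)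
       (map (\<lambda>(u, q). a_send A (run A G adv t u) q) (G ! v))"

definition outputs_by ::
  "alg \<Rightarrow> pgraph \<Rightarrow> (nat \<Rightarrow> bool list) \<Rightarrow> nat \<Rightarrow> nat \<Rightarrow> pgraph \<times> nat \<Rightarrow> bool" where
  "outputs_by A G adv T v res \<longleftrightarrow>
     (\<exists>t \<le> T. a_out A (run A G adv t v) = Some res \<and>
              (\<forall>t' < t. a_out A (run A G adv t' v) = None))"

definition labeled_TR ::
  "alg \<Rightarrow> pgraph \<Rightarrow> (nat \<Rightarrow> bool list) \<Rightarrow> nat \<Rightarrow> bool" where
  "labeled_TR A G adv T \<longleftrightarrow>
     (\<exists>H lab. (\<forall>v < length G. outputs_by A G adv T v (H, lab v)) \<and> port_iso G H lab)"

end

theory Submission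
  imports Defs "HOL-Library.Nat_Bijection"
begin

definition advf :: "nat \<Rightarrow> nat \<Rightarrow> bool list" where
  "advf r = (\<lambda>v. if v = r then [True] else [False])"

definition bn :: "bool list \<Rightarrow> nat" where
  "bn b = (if b = [True] then 1 else 0)"

definition A0 :: alg where
  "A0 = \<lparr> a_init = (\<lambda>d b. prod_encode (0, prod_encode (d, bn b))),
          a_send = (\<lambda>s p. prod_encode (s, p)),
          a_step = (\<lambda>s ms. prod_encode (Suc (fst (prod_decode s)), prod_encode (s, list_encode ms))),
          a_out = (\<lambda>_. None) \<rparr>"

abbreviation R where "R G b t v \<equiv> run A0 G b t v"

lemma run_out: "run (A\<lparr>a_out := x\<rparr>) G b t v = run A G b t v"
  by (induction t arbitrary: v) simp_all

lemma R0: "R G b 0 v = prod_encode (0, prod_encode (length (G!v), bn (b v)))"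
  by (simp add: A0_def)

lemma RSuc: "R G b (Suc t) v = prod_encode (Suc t, prod_encode (R G b t v,
     list_encode (map (\<lambda>x. prod_encode (R G b t (fst x), snd x)) (G ! v))))"
proof -
  have tm: "fst (prod_decode (R G b t v)) = t" for t v
    by (induction t arbitrary: v) (simp_all add: A0_def)
  show ?thesis using tm[of t v] by (simp add: A0_def case_prod_unfold)
qed

declare run.simps[simp del]

lemma R_time: "fst (prod_decode (R G b t v)) = t"
  by (cases t) (simp_all add: R0 RSuc)

lemma R_time_eq: "R G b t v = R G' b' t' v' \<Longrightarrow> t = t'"
  by (metis R_time)

lemma R_step_eq:
  assumes "R G b (Suc t) v = R G' b' (Suc t) v'"
  shows "R G b t v = R G' b' t v'" "length (G!v) = length (G'!v')"
    "\<And>p. p < length (G!v) \<Longrightarrow> snd (G!v!p) = snd (G'!v'!p) \<and>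
        R G b t (fst (G!v!p)) = R G' b' t (fst (G'!v'!p))"
proof -
  have e: "R G b t v = R G' b' t v'" and
     m: "map (\<lambda>x. prod_encode (R G b t (fst x), snd x)) (G ! v) =
         map (\<lambda>x. prod_encode (R G' b' t (fst x), snd x)) (G' ! v')"
    using assms by (simp_all add: RSuc list_encode_eq)
  show "R G b t v = R G' b' t v'" by (fact e)
  show l: "length (G!v) = length (G'!v')" using arg_cong[OF m, of length] by simp
  fix p assume "p < length (G!v)"
  then have "prod_encode (R G b t (fst (G!v!p)), snd (G!v!p)) = prod_encode (R G' b' t (fst (G'!v'!p)), snd (G'!v'!p))"
    using arg_cong[OF m, of "\<lambda>xs. xs ! p"] l by simp
  then show "snd (G!v!p) = snd (G'!v'!p) \<and> R G b t (fst (G!v!p)) = R G' b' t (fst (G'!v'!p))"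
    by simp
qed

lemma R_eq_0: "R G b t v = R G' b' t v' \<Longrightarrow> R G b 0 v = R G' b' 0 v'"
  by (induction t) (auto dest: R_step_eq(1))

lemma R_eq_deg: "R G b t v = R G' b' t v' \<Longrightarrow> length (G!v) = length (G'!v')"
  by (drule R_eq_0) (simp add: R0)

lemma R_eq_bit: "R G b t v = R G' b' t v' \<Longrightarrow> (b v = [True]) = (b' v' = [True])"
  by (drule R_eq_0) (simp add: R0 bn_def split: if_splits)


fun wvalid :: "pgraph \<Rightarrow> nat \<Rightarrow> (nat \<times> nat) list \<Rightarrow> bool" where
  "wvalid G v [] = True"
| "wvalid G v (pq # P) = (fst pq < length (G!v) \<and> snd (G!v!fst pq) = snd pq \<and> wvalid G (fst (G!v!fst pq)) P)"

fun wend :: "pgraph \<Rightarrow> nat \<Rightarrow> (nat \<times> nat) list \<Rightarrow> nat" where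
  "wend G v [] = v"
| "wend G v (pq # P) = wend G (fst (G!v!fst pq)) P"

lemma wvalid_app: "wvalid G v (P @ Q) = (wvalid G v P \<and> wvalid G (wend G v P) Q)"
  by (induction P arbitrary: v) auto

lemma wend_app: "wend G v (P @ Q) = wend G (wend G v P) Q"
  by (induction P arbitrary: v) auto

lemma wend_less: "wf_pgraph G \<Longrightarrow> v < length G \<Longrightarrow> wvalid G v P \<Longrightarrow> wend G v P < length G"
  by (induction P arbitrary: v) (auto simp: wf_pgraph_def)

lemma wend_inj:
  assumes "wf_pgraph G" shows "a < length G \<Longrightarrow> b < length G \<Longrightarrow> wvalid G a P \<Longrightarrow> wvalid G b P \<Longrightarrow>
    wend G a P = wend G b P \<Longrightarrow> a = b"
proof (induction P arbitrary: a b)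
  case Nil then show ?case by simp
next
  case (Cons pq P)
  obtain p q where pq: "pq = (p, q)" by force
  have pa: "p < length (G!a)" "snd (G!a!p) = q" and pb: "p < length (G!b)" "snd (G!b!p) = q"
    using Cons.prems pq by auto
  have "fst (G!a!p) = fst (G!b!p)"
    using Cons pq assms pa pb unfolding wf_pgraph_def by auto
  moreover have "G ! fst (G!a!p) ! snd (G!a!p) = (a, p)" "G ! fst (G!b!p) ! snd (G!b!p) = (b, p)"
    using assms Cons.prems(1,2) pa(1) pb(1) unfolding wf_pgraph_def by blast+
  ultimately show ?case using pa pb by simp
qed

lemma relpow_walk: "(u, w) \<in> adj G ^^ k \<Longrightarrow> \<exists>P. wvalid G u P \<and> wend G u P = w \<and> length P = k"
proof (induction k arbitrary: w)
  case 0 then show ?case by (intro exI[of _ "[]"]) simp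
next
  case (Suc k)
  then obtain x where x: "(u, x) \<in> adj G ^^ k" "(x, w) \<in> adj G" by auto
  obtain P where P: "wvalid G u P" "wend G u P = x" "length P = k" using Suc.IH x(1) by blast
  obtain p where p: "p < length (G!x)" "w = fst (G!x!p)" using x(2) unfolding adj_def by auto
  show ?case
    by (intro exI[of _ "P @ [(p, snd (G!x!p))]"]) (simp add: wvalid_app wend_app P p)
qed

lemma gdist_le_diam: "wf_pgraph G \<Longrightarrow> u < length G \<Longrightarrow> w < length G \<Longrightarrow> gdist G u w \<le> diam G"
  unfolding diam_def
  by (rule Max_ge) (auto intro: finite_image_set2)

lemma walk_exists:
  assumes "wf_pgraph G" "u < length G" "w < length G"
  shows "\<exists>P. wvalid G u P \<and> wend G u P = w \<and> length P \<le> diam G"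
proof -
  have "(u, w) \<in> (adj G)\<^sup>*" using assms unfolding wf_pgraph_def by auto
  then obtain k where "(u, w) \<in> adj G ^^ k" using rtrancl_power by blast
  then have "(u, w) \<in> adj G ^^ gdist G u w" unfolding gdist_def by (rule LeastI)
  then obtain P where "wvalid G u P" "wend G u P = w" "length P = gdist G u w"
    using relpow_walk by blast
  then show ?thesis using gdist_le_diam[OF assms] by auto
qed

lemma L1: "wvalid G v P \<Longrightarrow> length P \<le> t \<Longrightarrow> R G b t v = R G' b' t v' \<Longrightarrow>
   wvalid G' v' P \<and> R G b (t - length P) (wend G v P) = R G' b' (t - length P) (wend G' v' P)"
proof (induction P arbitrary: v v' t)
  case Nil then show ?case by simp
next
  case (Cons pq P)
  obtain t0 where t: "t = Suc t0" using Cons.prems(2) by (cases t) auto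
  have e: "R G b (Suc t0) v = R G' b' (Suc t0) v'" using Cons.prems t by simp
  have p: "fst pq < length (G!v)" "snd (G!v!fst pq) = snd pq" "wvalid G (fst (G!v!fst pq)) P"
    using Cons.prems by auto
  note s = R_step_eq[OF e]
  have "snd (G!v!fst pq) = snd (G'!v'!fst pq) \<and> R G b t0 (fst (G!v!fst pq)) = R G' b' t0 (fst (G'!v'!fst pq))"
    using s(3) p(1) by blast
  moreover have "length P \<le> t0" using Cons.prems t by simp
  ultimately show ?case using Cons.IH[OF p(3)] s(2) p t by auto
qed

definition hom :: "pgraph \<Rightarrow> pgraph \<Rightarrow> (nat \<Rightarrow> nat) \<Rightarrow> bool" where
  "hom G H f \<longleftrightarrow> (\<forall>v < length G. f v < length H \<and> length (H ! f v) = length (G ! v) \<and>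
        (\<forall>p < length (G ! v). H ! f v ! p = (f (fst (G ! v ! p)), snd (G ! v ! p))))"

lemma hom_walk:
  assumes "hom G H f" "wf_pgraph G"
  shows "u < length G \<Longrightarrow> wvalid G u Q = wvalid H (f u) Q \<and> (wvalid G u Q \<longrightarrow> wend H (f u) Q = f (wend G u Q))"
proof (induction Q arbitrary: u)
  case Nil then show ?case by simp
next
  case (Cons pq Q)
  obtain p q where pq: "pq = (p, q)" by force
  show ?case
  proof (cases "p < length (G!u)")
    case True
    then have "fst (G!u!p) < length G" using assms(2) Cons.prems unfolding wf_pgraph_def by auto
    then show ?thesis using Cons.IH[of "fst (G!u!p)"] assms(1) Cons.prems True pq
      unfolding hom_def by auto
  next
    case False
    then show ?thesis using assms(1) Cons.prems pq unfolding hom_def by auto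
  qed
qed


lemma advf_bit: "(advf r x = [True]) = (x = r)"
  by (simp add: advf_def)

lemma core:
  assumes G: "wf_pgraph G" and G': "wf_pgraph G'"
    and r: "r < length G" and v: "v < length G" and r': "r' < length G'" and v': "v' < length G'"
    and E: "R G (advf r) t v = R G' (advf r') t v'" and T: "2 * diam G + 1 \<le> t"
  shows "\<exists>f. port_iso G G' f \<and> f r = r' \<and> f v = v'"
proof -
  define D where "D = diam G"
  have L: "wvalid G' v' P \<and> R G (advf r) (t - length P) (wend G v P) = R G' (advf r') (t - length P) (wend G' v' P)"
    if "wvalid G v P" "length P \<le> t" for P
    using L1[OF that E] .
  have bitL: "wvalid G' v' P \<and> (wend G v P = r \<longleftrightarrow> wend G' v' P = r')"
    if "wvalid G v P" "length P \<le> t" for P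
    using L[OF that] R_eq_bit[of G "advf r" _ _ G' "advf r'"] advf_bit by metis
  have degL: "length (G ! wend G v P) = length (G' ! wend G' v' P)"
    if "wvalid G v P" "length P \<le> t" for P
    using L[OF that] R_eq_deg by metis
  define pi where "pi u = (SOME P. wvalid G v P \<and> wend G v P = u \<and> length P \<le> D)" for u
  have pi: "wvalid G v (pi u) \<and> wend G v (pi u) = u \<and> length (pi u) \<le> D" if "u < length G" for u
    unfolding pi_def D_def using someI_ex[OF walk_exists[OF G v that]] .
  define f where "f u = wend G' v' (pi u)" for u
  have K: "wend G' v' P = f (wend G v P)" if P: "wvalid G v P" "length P \<le> D + 1" for P
  proof -
    define u where "u = wend G v P"
    have u: "u < length G" unfolding u_def using wend_less[OF G v P(1)] .
    obtain Q where Q: "wvalid G u Q" "wend G u Q = r" "length Q \<le> D"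
      using walk_exists[OF G u r] D_def by blast
    have a: "wvalid G v (P @ Q)" "wend G v (P @ Q) = r" "length (P @ Q) \<le> t"
      using P Q T u_def D_def by (auto simp: wvalid_app wend_app)
    have b: "wvalid G v (pi u @ Q)" "wend G v (pi u @ Q) = r" "length (pi u @ Q) \<le> t"
      using pi[OF u] Q T D_def by (auto simp: wvalid_app wend_app)
    have a': "wvalid G' (wend G' v' P) Q" "wend G' (wend G' v' P) Q = r'"
      using bitL[OF a(1,3)] a(2) by (auto simp: wvalid_app wend_app)
    have b': "wvalid G' (wend G' v' (pi u)) Q" "wend G' (wend G' v' (pi u)) Q = r'"
      using bitL[OF b(1,3)] b(2) by (auto simp: wvalid_app wend_app)
    have "length P \<le> t" using P(2) T unfolding D_def by linarith
    then have "wvalid G' v' P" using L[OF P(1)] by blast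
    moreover have "wvalid G' v' (pi u)" using L[of "pi u"] pi[OF u] T D_def by auto
    ultimately show ?thesis unfolding f_def u_def[symmetric]
      using wend_inj[OF G' _ _ a'(1) b'(1)] a'(2) b'(2) wend_less[OF G' v'] by metis
  qed
  have fless: "f u < length G'" if "u < length G" for u
    unfolding f_def using wend_less[OF G' v'] L[of "pi u"] pi[OF that] T D_def by auto
  have hom: "hom G G' f"
    unfolding hom_def
  proof (intro allI impI conjI)
    fix u assume u: "u < length G"
    show "f u < length G'" using fless u .
    show dg: "length (G' ! f u) = length (G ! u)"
      using degL[of "pi u"] pi[OF u] T D_def unfolding f_def by auto
    fix p assume p: "p < length (G ! u)"
    define w where "w = fst (G!u!p)"
    define P where "P = pi u @ [(p, snd (G!u!p))]"
    have P: "wvalid G v P" "length P \<le> D + 1" "wend G v P = w"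
      using pi[OF u] p by (auto simp: P_def w_def wvalid_app wend_app)
    have "length P \<le> t" using P(2) T unfolding D_def by linarith
    then have "wvalid G' v' P" using L[OF P(1)] by blast
    then have "wvalid G' (f u) [(p, snd (G!u!p))]" unfolding P_def f_def by (simp add: wvalid_app)
    moreover have "wend G' (f u) [(p, snd (G!u!p))] = f w"
      using K[OF P(1,2)] P(3) unfolding P_def f_def by (simp add: wend_app)
    ultimately show "G' ! f u ! p = (f (fst (G ! u ! p)), snd (G ! u ! p))"
      unfolding w_def by (cases "G' ! f u ! p") auto
  qed
  have fr: "f r = r'"
    using bitL[of "pi r"] pi[OF r] T D_def unfolding f_def by auto
  have fbit: "w = r" if "w < length G" "f w = r'" for w
    using bitL[of "pi w"] pi[OF that(1)] T D_def that(2) unfolding f_def by auto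
  have fv: "f v = v'" using K[of "[]"] by simp
  have inj: "inj_on f {..<length G}"
  proof (rule inj_onI)
    fix u1 u2 assume u: "u1 \<in> {..<length G}" "u2 \<in> {..<length G}" and e: "f u1 = f u2"
    obtain Q where Q: "wvalid G u1 Q" "wend G u1 Q = r" using walk_exists[OF G _ r] u by blast
    have h1: "wvalid G' (f u1) Q" "wend G' (f u1) Q = r'"
      using hom_walk[OF hom G, of u1 Q] Q u fr by auto
    then have "wvalid G u2 Q" "f (wend G u2 Q) = r'"
      using hom_walk[OF hom G, of u2 Q] u e by auto
    then have "wend G u2 Q = r" using fbit wend_less[OF G] u by auto
    then show "u1 = u2" using wend_inj[OF G _ _ Q(1) \<open>wvalid G u2 Q\<close>] Q(2) u by simp
  qed
  have onto: "w \<in> f ` {..<length G}" if "w < length G'" for w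
  proof -
    have "(f v, w) \<in> (adj G')\<^sup>*" using G' that fv v' unfolding wf_pgraph_def by auto
    then show ?thesis
    proof (induction rule: rtrancl_induct)
      case base then show ?case using v by auto
    next
      case (step y z)
      then obtain x where x: "x < length G" "y = f x" by auto
      obtain p where p: "p < length (G' ! y)" "z = fst (G' ! y ! p)" using step(2) unfolding adj_def by auto
      have "p < length (G ! x)" using hom x p unfolding hom_def by auto
      then have "z = f (fst (G!x!p))" "fst (G!x!p) < length G"
        using hom x p G unfolding hom_def wf_pgraph_def by auto
      then show ?case by auto
    qed
  qed
  have "bij_betw f {..<length G} {..<length G'}"
    unfolding bij_betw_def using inj onto fless by auto
  then have "port_iso G G' f" using hom unfolding port_iso_def hom_def by auto
  then show ?thesis using fr fv by blast
qed


lemma iso_comp: "port_iso G H f \<Longrightarrow> port_iso H K g \<Longrightarrow> port_iso G K (g \<circ> f)"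
  unfolding port_iso_def
proof (elim conjE, intro conjI allI impI)
  assume f: "bij_betw f {..<length G} {..<length H}" and g: "bij_betw g {..<length H} {..<length K}"
    and F: "\<forall>v<length G. length (H ! f v) = length (G ! v) \<and>
        (\<forall>p<length (G ! v). H ! f v ! p = (f (fst (G ! v ! p)), snd (G ! v ! p)))"
    and Gg: "\<forall>v<length H. length (K ! g v) = length (H ! v) \<and>
        (\<forall>p<length (H ! v). K ! g v ! p = (g (fst (H ! v ! p)), snd (H ! v ! p)))"
  show "bij_betw (g \<circ> f) {..<length G} {..<length K}" using bij_betw_trans[OF f g] .
  fix v assume v: "v < length G"
  have fv: "f v < length H" using f v unfolding bij_betw_def by auto
  show "length (K ! (g \<circ> f) v) = length (G ! v)" using F Gg v fv by simp
  fix p assume "p < length (G ! v)"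
  then show "K ! (g \<circ> f) v ! p = ((g \<circ> f) (fst (G ! v ! p)), snd (G ! v ! p))"
    using F Gg v fv by simp
qed

lemma iso_inv:
  assumes G: "wf_pgraph G" and f: "port_iso G H f"
  shows "port_iso H G (inv_into {..<length G} f)"
proof -
  let ?g = "inv_into {..<length G} f"
  have b: "bij_betw f {..<length G} {..<length H}" using f unfolding port_iso_def by auto
  have bi: "bij_betw ?g {..<length H} {..<length G}" using bij_betw_inv_into[OF b] .
  have F: "\<forall>v<length G. length (H ! f v) = length (G ! v) \<and>
        (\<forall>p<length (G ! v). H ! f v ! p = (f (fst (G ! v ! p)), snd (G ! v ! p)))"
    using f unfolding port_iso_def by auto
  have "length (G ! ?g w) = length (H ! w) \<and>
        (\<forall>p<length (H ! w). G ! ?g w ! p = (?g (fst (H ! w ! p)), snd (H ! w ! p)))"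
    if w: "w < length H" for w
  proof -
    obtain v where v: "v < length G" "w = f v" using b w unfolding bij_betw_def by auto
    have gv: "?g w = v" using v b unfolding bij_betw_def by (simp add: inv_into_f_f)
    have "G ! v ! p = (?g (fst (H ! w ! p)), snd (H ! w ! p))" if p: "p < length (H ! w)" for p
    proof -
      have p': "p < length (G ! v)" using F v p by auto
      then have "fst (G ! v ! p) < length G" using G v unfolding wf_pgraph_def by auto
      then show ?thesis using F v p' b unfolding bij_betw_def
        by (simp add: inv_into_f_f prod_eq_iff)
    qed
    then show ?thesis using gv F v by auto
  qed
  then show ?thesis unfolding port_iso_def using bi by auto
qed

lemma iso_inv_pt:
  "port_iso G H f \<Longrightarrow> r < length G \<Longrightarrow> inv_into {..<length G} f (f r) = r"
  unfolding port_iso_def bij_betw_def by (simp add: inv_into_f_f)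

lemma rigid:
  assumes G: "wf_pgraph G" and f: "port_iso G H f" and g: "port_iso G H g"
    and r: "r < length G" and e: "f r = g r"
  shows "v < length G \<Longrightarrow> f v = g v"
proof -
  assume v: "v < length G"
  have "(r, v) \<in> (adj G)\<^sup>*" using G r v unfolding wf_pgraph_def by auto
  then have "v < length G \<longrightarrow> f v = g v"
  proof (induction rule: rtrancl_induct)
    case base then show ?case using e by simp
  next
    case (step y z)
    obtain p where p: "y < length G" "p < length (G!y)" "z = fst (G!y!p)" using step(2) unfolding adj_def by auto
    have "H ! f y ! p = (f z, snd (G!y!p))" "H ! g y ! p = (g z, snd (G!y!p))"
      using f g p unfolding port_iso_def by auto
    then show ?case using step(3) p by simp
  qed
  then show ?thesis using v by simp
qed

definition Cls :: "nat \<Rightarrow> (pgraph \<times> nat \<times> nat) set" where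
  "Cls s = {(G', r', v'). wf_pgraph G' \<and> r' < length G' \<and> v' < length G' \<and> (\<exists>t. R G' (advf r') t v' = s)}"

definition tiso :: "pgraph \<times> nat \<times> nat \<Rightarrow> pgraph \<times> nat \<times> nat \<Rightarrow> bool" where
  "tiso x y = (\<exists>f. port_iso (fst x) (fst y) f \<and> f (fst (snd x)) = fst (snd y) \<and> f (snd (snd x)) = snd (snd y))"

definition good :: "nat \<Rightarrow> bool" where
  "good s = (Cls s \<noteq> {} \<and> (\<forall>x\<in>Cls s. \<forall>y\<in>Cls s. tiso x y))"

definition canon :: "pgraph \<Rightarrow> nat \<Rightarrow> pgraph \<times> nat" where
  "canon G r = (SOME Hh. \<exists>f. port_iso G (fst Hh) f \<and> f r = snd Hh)"

definition isof :: "pgraph \<Rightarrow> nat \<Rightarrow> nat \<Rightarrow> nat" where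
  "isof G r = (SOME f. port_iso G (fst (canon G r)) f \<and> f r = snd (canon G r))"

definition outv :: "nat \<Rightarrow> pgraph \<times> nat" where
  "outv s = (let x = SOME x. x \<in> Cls s in (fst (canon (fst x) (fst (snd x))), isof (fst x) (fst (snd x)) (snd (snd x))))"

definition Aout :: alg where
  "Aout = A0\<lparr>a_out := (\<lambda>s. if good s then Some (outv s) else None)\<rparr>"

lemma iso_id: "port_iso G G id"
  unfolding port_iso_def by auto

lemma canon_ok: "port_iso G (fst (canon G r)) (isof G r) \<and> isof G r r = snd (canon G r)"
proof -
  have "\<exists>f. port_iso G (fst (canon G r)) f \<and> f r = snd (canon G r)"
    unfolding canon_def by (rule someI_ex[where P="\<lambda>Hh. \<exists>f. port_iso G (fst Hh) f \<and> f r = snd Hh"])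
      (intro exI[of _ "(G, r)"] exI[of _ id], simp add: iso_id)
  then show ?thesis unfolding isof_def by (rule someI_ex)
qed

lemma canon_eq:
  assumes G: "wf_pgraph G" and G1: "wf_pgraph G1" and g: "port_iso G G1 g" and r: "r < length G"
    and gr: "g r = r1"
  shows "canon G1 r1 = canon G r"
proof -
  have "(\<exists>f. port_iso G1 (fst Hh) f \<and> f r1 = snd Hh) = (\<exists>f. port_iso G (fst Hh) f \<and> f r = snd Hh)" for Hh
  proof
    assume "\<exists>f. port_iso G1 (fst Hh) f \<and> f r1 = snd Hh"
    then obtain f where "port_iso G1 (fst Hh) f" "f r1 = snd Hh" by blast
    then show "\<exists>f. port_iso G (fst Hh) f \<and> f r = snd Hh"
      using iso_comp[OF g] gr by (intro exI[of _ "f \<circ> g"]) auto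
  next
    assume "\<exists>f. port_iso G (fst Hh) f \<and> f r = snd Hh"
    then obtain f where f: "port_iso G (fst Hh) f" "f r = snd Hh" by blast
    let ?gi = "inv_into {..<length G} g"
    show "\<exists>f. port_iso G1 (fst Hh) f \<and> f r1 = snd Hh"
      using iso_comp[OF iso_inv[OF G g] f(1)] iso_inv_pt[OF g r] gr f(2)
      by (intro exI[of _ "f \<circ> ?gi"]) auto
  qed
  then show ?thesis unfolding canon_def by simp
qed

lemma outv_correct:
  assumes G: "wf_pgraph G" and r: "r < length G" and v: "v < length G"
    and gd: "good s" and mem: "(G, r, v) \<in> Cls s"
  shows "outv s = (fst (canon G r), isof G r v)"
proof -
  define x where "x = (SOME x. x \<in> Cls s)"
  have x: "x \<in> Cls s" unfolding x_def using mem by (rule someI)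
  obtain G1 r1 v1 where x1: "x = (G1, r1, v1)" by (cases x) auto
  have G1: "wf_pgraph G1" and r1: "r1 < length G1" using x x1 unfolding Cls_def by auto
  obtain g where g: "port_iso G G1 g" "g r = r1" "g v = v1"
    using gd mem x x1 unfolding good_def tiso_def by fastforce
  have ce: "canon G1 r1 = canon G r" using canon_eq[OF G G1 g(1) r g(2)] .
  have c1: "port_iso G1 (fst (canon G r)) (isof G1 r1)" "isof G1 r1 r1 = snd (canon G r)"
    using canon_ok[of G1 r1] ce by auto
  have "isof G1 r1 (g v) = isof G r v"
    using rigid[OF G iso_comp[OF g(1) c1(1)] conjunct1[OF canon_ok[of G r]] r] c1(2) g(2) canon_ok[of G r] v
    by simp
  then show ?thesis unfolding outv_def x_def[symmetric] using x1 ce g(3) by simp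
qed

lemma good_T:
  assumes G: "wf_pgraph G" and r: "r < length G" and v: "v < length G"
  shows "good (R G (advf r) (2 * diam G + 1) v)"
proof -
  let ?T = "2 * diam G + 1"
  let ?s = "R G (advf r) ?T v"
  have mem: "(G, r, v) \<in> Cls ?s" unfolding Cls_def using G r v by blast
  have c: "\<exists>f. port_iso G G' f \<and> f r = r' \<and> f v = v'" if y: "(G', r', v') \<in> Cls ?s" for G' r' v'
  proof -
    obtain t where t: "R G' (advf r') t v' = ?s" and yy: "wf_pgraph G'" "r' < length G'" "v' < length G'"
      using y unfolding Cls_def by auto
    have "t = 2 * diam G + 1" using R_time_eq[OF t] .
    then have "R G (advf r) ?T v = R G' (advf r') ?T v'" using t by simp
    then show ?thesis using core[OF G yy(1) r v yy(2,3)] by blast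
  qed
  have "tiso x y" if xy: "x \<in> Cls ?s" "y \<in> Cls ?s" for x y
  proof -
    obtain G1 r1 v1 where x1: "x = (G1, r1, v1)" by (cases x) auto
    obtain G2 r2 v2 where y1: "y = (G2, r2, v2)" by (cases y) auto
    obtain f1 where f1: "port_iso G G1 f1" "f1 r = r1" "f1 v = v1" using c xy(1) x1 by blast
    obtain f2 where f2: "port_iso G G2 f2" "f2 r = r2" "f2 v = v2" using c xy(2) y1 by blast
    have "port_iso G1 G2 (f2 \<circ> inv_into {..<length G} f1)"
      using iso_comp[OF iso_inv[OF G f1(1)] f2(1)] .
    then show ?thesis unfolding tiso_def x1 y1
      using iso_inv_pt[OF f1(1) r] iso_inv_pt[OF f1(1) v] f1 f2
      by (intro exI[of _ "f2 \<circ> inv_into {..<length G} f1"]) auto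
  qed
  then show ?thesis unfolding good_def using mem by blast
qed

theorem proposition3p1:
  shows "\<exists>A :: alg. \<forall>G. wf_pgraph G \<longrightarrow>
           (\<exists>r < length G.
              labeled_TR A G (\<lambda>v. if v = r then [True] else [False]) (2 * diam G + 1))"
proof (intro exI[of _ Aout] allI impI)
  fix G assume G: "wf_pgraph G"
  have r: "0 < length G" using G unfolding wf_pgraph_def by auto
  let ?T = "2 * diam G + 1"
  have "labeled_TR Aout G (advf 0) ?T"
    unfolding labeled_TR_def
  proof (intro exI conjI allI impI)
    fix v assume v: "v < length G"
    define t0 where "t0 = (LEAST t. good (R G (advf 0) t v))"
    have gT: "good (R G (advf 0) ?T v)" using good_T[OF G r v] .
    have t0: "good (R G (advf 0) t0 v)" unfolding t0_def using gT by (rule LeastI)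
    have t0T: "t0 \<le> ?T" unfolding t0_def using gT by (rule Least_le)
    have ng: "\<not> good (R G (advf 0) t' v)" if "t' < t0" for t'
      using not_less_Least[OF that[unfolded t0_def]] .
    have mem: "(G, 0, v) \<in> Cls (R G (advf 0) t0 v)" unfolding Cls_def using G r v by blast
    show "outputs_by Aout G (advf 0) ?T v (fst (canon G 0), isof G 0 v)"
      unfolding outputs_by_def Aout_def run_out
      using t0T t0 ng outv_correct[OF G r v t0 mem]
      by (intro exI[of _ t0]) auto
  next
    show "port_iso G (fst (canon G 0)) (isof G 0)" using canon_ok by blast
  qed
  then show "\<exists>r<length G. labeled_TR Aout G (\<lambda>v. if v = r then [True] else [False]) ?T"
    using r unfolding advf_def by blast
qed

end
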